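(* Assume $E\in\mathbb{S}^n_{++}$, $0<\alpha<1$ and $0\ne X\in\partial K_E(\alpha)$. Let $S:=\frac{1}{n-\alpha^2}\big(E^{-1}-\frac{\alpha^2}{\mathrm{tr}(E^{-1}X)}E^{-1}XE^{-1}\big)$ and $q(t):=\mathrm{tr}\big(((E+tX)S)^2\big)$. For every $0<\beta<1$ and $t>-1$, \[ \big(E(t)\in\mathbb{S}^n_{++}\big)\wedge\big(S\in\mathrm{int}(K_{E(t)}(\beta)^* )\big)\iff q(t)<\frac{1}{n-\beta^2}, \] where $E(t)=\frac{1}{1+t}(E+tX)$. Furthermore, $q$ is strictly convex, $q(0)=1/(n-\alpha^2)$ and $q'(0)<0$.
   Context: $\mathbb{S}^n$ is the space of real symmetric $n\times n$ matrices with trace inner product, $\mathbb{S}^n_{++}$ the positive definite matrices. For $E\in\mathbb{S}^n_{++}$: $\|X\|_E=\mathrm{tr}((E^{-1}X)^2)^{1/2}$, and for $\gamma>0$, $K_E(\gamma)=\{X\in\mathbb{S}^n:\mathrm{tr}(E^{-1}X)\ge\gamma\|X\|_E\}$; $K_E(\gamma)^*=\{S:\mathrm{tr}(XS)\ge0\ \forall X\in K_E(\gamma)\}$ is its dual cone with respect to the trace inner product; $\partial$ and $\mathrm{int}$ denote boundary and interior. *)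

theory Defs
  imports "HOL-Analysis.Analysis"
begin

definition sym_mats :: "(real^'n^'n) set" where
  "sym_mats = {A. transpose A = A}"

text \<open>Topology of the space of symmetric matrices (the Euclidean norm on real^'n^'n is
  the Frobenius norm, i.e. the norm of the trace inner product).\<close>
definition sym_top :: "(real^'n^'n) topology" where
  "sym_top = subtopology euclidean sym_mats"

definition pos_def :: "(real^'n^'n) set" where
  "pos_def = {A. transpose A = A \<and> (\<forall>x::real^'n. x \<noteq> 0 \<longrightarrow> x \<bullet> (A *v x) > 0)}"

definition normE :: "real^'n^'n \<Rightarrow> real^'n^'n \<Rightarrow> real" where
  "normE E X = sqrt (trace ((matrix_inv E ** X) ** (matrix_inv E ** X)))"

definition coneK :: "real^'n^'n \<Rightarrow> real \<Rightarrow> (real^'n^'n) set" where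
  "coneK E \<gamma> = {X \<in> sym_mats. trace (matrix_inv E ** X) \<ge> \<gamma> * normE E X}"

definition dual_cone :: "(real^'n^'n) set \<Rightarrow> (real^'n^'n) set" where
  "dual_cone K = {S \<in> sym_mats. \<forall>X\<in>K. trace (X ** S) \<ge> 0}"

definition strict_convex_on :: "real set \<Rightarrow> (real \<Rightarrow> real) \<Rightarrow> bool" where
  "strict_convex_on A f \<longleftrightarrow> convex A \<and>
    (\<forall>x\<in>A. \<forall>y\<in>A. \<forall>u. x \<noteq> y \<longrightarrow> 0 < u \<longrightarrow> u < 1 \<longrightarrow>
       f ((1 - u) * x + u * y) < (1 - u) * f x + u * f y)"

end

theory Submission
  imports Defs
begin

lemma inner_matvec_transpose:
  fixes A :: "real^'n^'n"
  shows "x \<bullet> (A *v y) = (transpose A *v x) \<bullet> y"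
  by (simp add: dot_lmul_matrix)

lemma sym_form:
  fixes P :: "real^'n^'n"
  assumes "transpose P = P"
  shows "x \<bullet> (P *v y) = y \<bullet> (P *v x)"
  by (subst inner_matvec_transpose) (simp add: assms inner_commute)

lemma matvec_sum: "(A::real^'n^'m) *v (\<Sum>c\<in>C. f c) = (\<Sum>c\<in>C. A *v f c)"
  by (induction C rule: infinite_finite_induct) (auto simp: matrix_vector_right_distrib)

lemma gs_exists:
  fixes P :: "real^'n^'n"
  assumes P: "P \<in> pos_def" and fin: "finite A"
  shows "\<exists>C. finite C \<and> A \<subseteq> span C \<and> (\<forall>c\<in>C. c \<bullet> (P *v c) = 1)
           \<and> (\<forall>c\<in>C. \<forall>d\<in>C. c \<noteq> d \<longrightarrow> c \<bullet> (P *v d) = 0)"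
  using fin
proof (induction A rule: finite_induct)
  case empty
  show ?case by (rule exI[of _ "{}"]) auto
next
  case (insert b A)
  from P have symP: "transpose P = P" and posP: "\<And>x. x \<noteq> 0 \<Longrightarrow> x \<bullet> (P *v x) > 0"
    unfolding pos_def_def by auto
  from insert.IH obtain C where finC: "finite C" and AC: "A \<subseteq> span C"
    and one: "\<forall>c\<in>C. c \<bullet> (P *v c) = 1" and orth: "\<forall>c\<in>C. \<forall>d\<in>C. c \<noteq> d \<longrightarrow> c \<bullet> (P *v d) = 0"
    by blast
  show ?case
  proof (cases "b \<in> span C")
    case True
    show ?thesis
      using finC AC True one orth by (intro exI[of _ C] conjI) simp_all
  next
    case False
    define b' where "b' = b - (\<Sum>c\<in>C. (c \<bullet> (P *v b)) *\<^sub>R c)"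
    have sp: "(\<Sum>c\<in>C. (c \<bullet> (P *v b)) *\<^sub>R c) \<in> span C"
      by (intro span_sum span_scale span_base)
    have b'nz: "b' \<noteq> 0"
    proof
      assume "b' = 0"
      then have "b = (\<Sum>c\<in>C. (c \<bullet> (P *v b)) *\<^sub>R c)" unfolding b'_def by simp
      with sp False show False by simp
    qed
    have orth': "d \<bullet> (P *v b') = 0" if dC: "d \<in> C" for d
    proof -
      have "d \<bullet> (P *v b') = d \<bullet> (P *v b) - (\<Sum>c\<in>C. (c \<bullet> (P *v b)) * (d \<bullet> (P *v c)))"
        unfolding b'_def by (simp add: matrix_vector_mult_diff_distrib matvec_sum
            inner_diff_right inner_sum_right matrix_vector_mult_scaleR)
      also have "(\<Sum>c\<in>C. (c \<bullet> (P *v b)) * (d \<bullet> (P *v c))) = (d \<bullet> (P *v b)) * (d \<bullet> (P *v d))"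
      proof -
        have z: "\<forall>x\<in>C - {d}. (x \<bullet> (P *v b)) * (d \<bullet> (P *v x)) = 0" using orth dC by auto
        show ?thesis using finC dC by (subst sum.remove[of C d]) (auto simp: sum.neutral[OF z])
      qed
      finally show ?thesis using one dC by simp
    qed
    define r where "r = sqrt (b' \<bullet> (P *v b'))"
    have rpos: "r > 0" unfolding r_def using posP[OF b'nz] by simp
    define c' where "c' = (1 / r) *\<^sub>R b'"
    have c'one: "c' \<bullet> (P *v c') = 1"
      unfolding c'_def using rpos posP[OF b'nz]
      by (simp add: matrix_vector_mult_scaleR r_def power2_eq_square[symmetric])
    have c'orth: "d \<bullet> (P *v c') = 0" "c' \<bullet> (P *v d) = 0" if "d \<in> C" for d
      using orth'[OF that] sym_form[OF symP, of c' d]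
      by (auto simp: c'_def matrix_vector_mult_scaleR)
    have c'notin: "c' \<notin> C" using c'orth c'one by fastforce
    have bspan: "b \<in> span (insert c' C)"
    proof -
      have "b = r *\<^sub>R c' + (\<Sum>c\<in>C. (c \<bullet> (P *v b)) *\<^sub>R c)"
        unfolding c'_def b'_def using rpos by simp
      also have "\<dots> \<in> span (insert c' C)"
        by (intro span_add span_scale span_sum span_base) auto
      finally show ?thesis .
    qed
    show ?thesis
    proof (intro exI[of _ "insert c' C"] conjI)
      show "finite (insert c' C)" using finC by simp
      show "insert b A \<subseteq> span (insert c' C)"
        using AC bspan span_mono[of C "insert c' C"] by auto
      show "\<forall>c\<in>insert c' C. c \<bullet> (P *v c) = 1" using one c'one by simp
      show "\<forall>c\<in>insert c' C. \<forall>d\<in>insert c' C. c \<noteq> d \<longrightarrow> c \<bullet> (P *v d) = 0"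
      proof (intro ballI impI)
        fix c d assume "c \<in> insert c' C" "d \<in> insert c' C" "c \<noteq> d"
        then show "c \<bullet> (P *v d) = 0" using orth c'orth by auto
      qed
    qed
  qed
qed

lemma tWPW_entry:
  fixes P W :: "real^'n^'n"
  shows "(transpose W ** P ** W) $ i $ j = column i W \<bullet> (P *v column j W)"
proof -
  have "(transpose W ** P ** W) $ i $ j = (\<Sum>k\<in>UNIV. \<Sum>l\<in>UNIV. W$l$i * P$l$k * W$k$j)"
    by (simp add: matrix_matrix_mult_def transpose_def sum_distrib_right)
  also have "\<dots> = (\<Sum>l\<in>UNIV. \<Sum>k\<in>UNIV. W$l$i * P$l$k * W$k$j)"
    by (rule sum.swap)
  also have "\<dots> = column i W \<bullet> (P *v column j W)"
    by (simp add: column_def inner_vec_def matrix_vector_mult_def sum_distrib_left mult.assoc)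
  finally show ?thesis .
qed

lemma pd_factor:
  fixes P :: "real^'n^'n"
  assumes P: "P \<in> pos_def"
  shows "\<exists>W::real^'n^'n. transpose W ** P ** W = mat 1"
proof -
  obtain C where finC: "finite C" and BC: "Basis \<subseteq> span C"
    and one: "\<forall>c\<in>C. c \<bullet> (P *v c) = 1" and orth: "\<forall>c\<in>C. \<forall>d\<in>C. c \<noteq> d \<longrightarrow> c \<bullet> (P *v d) = 0"
    using gs_exists[OF P, of Basis] by auto
  from P have symP: "transpose P = P" unfolding pos_def_def by auto
  have spanC: "UNIV \<subseteq> span C"
    by (metis BC span_Basis span_minimal subspace_span)
  have indep: "independent C"
  proof
    assume "dependent C"
    then obtain u v where vC: "v \<in> C" and uv: "u v \<noteq> 0" and s0: "(\<Sum>w\<in>C. u w *\<^sub>R w) = 0"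
      using dependent_finite[OF finC] by auto
    have "0 = (\<Sum>w\<in>C. u w *\<^sub>R w) \<bullet> (P *v v)" using s0 by simp
    also have "\<dots> = (\<Sum>w\<in>C. u w * (w \<bullet> (P *v v)))" by (simp add: inner_sum_left)
    also have "\<dots> = u v"
    proof -
      have z: "\<forall>w\<in>C - {v}. u w * (w \<bullet> (P *v v)) = 0" using orth vC by auto
      show ?thesis using finC vC one by (subst sum.remove[of C v]) (auto simp: sum.neutral[OF z])
    qed
    finally show False using uv by simp
  qed
  have "dim (UNIV :: (real^'n) set) = card C"
    using dim_unique[OF subset_UNIV spanC indep refl] .
  then have cardC: "card C = CARD('n)" by simp
  obtain f where bf: "bij_betw f (UNIV::'n set) C"
    using finite_same_card_bij[of "UNIV::'n set" C] finC cardC by auto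
  define W :: "real^'n^'n" where "W = (\<chi> i j. f j $ i)"
  have col: "column j W = f j" for j unfolding W_def column_def by (simp add: vec_eq_iff)
  have fC: "f j \<in> C" for j by (rule bij_betw_apply[OF bf]) simp
  have finj: "f i = f j \<Longrightarrow> i = j" for i j using bf unfolding bij_betw_def inj_on_def by blast
  show ?thesis
  proof (rule exI[of _ W])
    have e: "f i \<bullet> (P *v f j) = (if i = j then 1 else 0)" for i j
    proof (cases "i = j")
      case True then show ?thesis using one fC by simp
    next
      case False
      then have "f i \<noteq> f j" using finj by blast
      then show ?thesis using orth fC False by simp
    qed
    show "transpose W ** P ** W = mat 1"
      by (simp add: vec_eq_iff tWPW_entry col e mat_def)
  qed
qed

lemma trace_scaleR: "trace (c *\<^sub>R (A::real^'n^'n)) = c * trace A"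
  by (simp add: trace_def sum_distrib_left)

lemma frob: "trace (transpose A ** (B::real^'n^'n)) = A \<bullet> B"
  unfolding trace_def matrix_matrix_mult_def transpose_def inner_vec_def
  by simp (subst sum.swap, simp)

lemma frob_sym:
  assumes "transpose A = A" shows "trace (A ** (B::real^'n^'n)) = A \<bullet> B"
  using frob[of A B] assms by simp

lemma I_inner: "mat 1 \<bullet> (A::real^'n^'n) = trace A"
  using frob[of "mat 1" A] by simp

lemma I_inner_I: "mat 1 \<bullet> (mat 1::real^'n^'n) = real CARD('n)"
  by (simp add: I_inner trace_I)

lemma minv_eq:
  fixes A B :: "real^'n^'n"
  assumes AB: "A ** B = mat 1"
  shows "matrix_inv A = B"
proof -
  have BA: "B ** A = mat 1" using AB matrix_left_right_inverse by blast
  have "A ** matrix_inv A = mat 1 \<and> matrix_inv A ** A = mat 1"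
    unfolding matrix_inv_def by (rule someI[of _ B]) (use AB BA in simp)
  then have "matrix_inv A ** A = mat 1" by simp
  then have "matrix_inv A = matrix_inv A ** (A ** B)" using AB by simp
  also have "\<dots> = B" by (simp add: matrix_mul_assoc \<open>matrix_inv A ** A = mat 1\<close>)
  finally show ?thesis .
qed

definition outer :: "real^'n \<Rightarrow> real^'n^'n" where "outer x = (\<chi> i j. x$i * x$j)"

lemma inner_outer: "(Y::real^'n^'n) \<bullet> outer x = x \<bullet> (Y *v x)"
  unfolding outer_def inner_vec_def matrix_vector_mult_def
  by (simp add: sum_distrib_left mult_ac)

lemma outer_outer: "outer x \<bullet> outer x = (x \<bullet> x)^2"
  unfolding outer_def inner_vec_def power2_eq_square
  by (simp add: sum_distrib_left sum_distrib_right mult_ac)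

lemma I_outer: "mat 1 \<bullet> outer x = x \<bullet> x"
  by (simp add: inner_commute[of "mat 1"] inner_outer)

lemma norm_outer: "norm (outer x) = x \<bullet> x"
  by (simp add: norm_eq_sqrt_inner outer_outer)

lemma quad_bound: "x \<bullet> ((Y::real^'n^'n) *v x) \<le> norm Y * (x \<bullet> x)"
  using norm_cauchy_schwarz[of Y "outer x"] by (simp add: inner_outer norm_outer)

lemma col_mult: "(A::real^'n^'n) *v column j B = column j (A ** B)"
  unfolding column_def matrix_vector_mult_def matrix_matrix_mult_def by (simp add: vec_eq_iff)

lemma sym_entry:
  assumes "transpose Y = Y" shows "Y $ i $ j = Y $ j $ i"
proof -
  have "transpose Y $ j $ i = Y $ j $ i" using assms by simp
  then show ?thesis by (simp add: transpose_def)
qed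

lemma trace_cube_eq:
  fixes Y :: "real^'n^'n"
  assumes sY: "transpose Y = Y"
  shows "trace (Y ** Y ** Y) = (\<Sum>j\<in>UNIV. column j Y \<bullet> (Y *v column j Y))"
proof -
  have "trace (Y ** Y ** Y) = trace (Y ** (Y ** Y))" by (simp add: matrix_mul_assoc)
  also have "\<dots> = (\<Sum>j\<in>UNIV. \<Sum>l\<in>UNIV. Y $ j $ l * (Y ** Y) $ l $ j)"
    unfolding trace_def by (simp add: matrix_matrix_mult_def)
  also have "\<dots> = (\<Sum>j\<in>UNIV. column j Y \<bullet> column j (Y ** Y))"
    unfolding inner_vec_def column_def using sym_entry[OF sY] by simp
  finally show ?thesis by (simp add: col_mult)
qed

lemma cols_inner: "(\<Sum>j\<in>UNIV. column j Y \<bullet> column j Y) = (Y::real^'n^'n) \<bullet> Y"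
  unfolding inner_vec_def column_def by simp (rule sum.swap)

lemma trace_cube_le:
  fixes Y :: "real^'n^'n"
  assumes sY: "transpose Y = Y"
  shows "trace (Y ** Y ** Y) \<le> norm Y ^ 3"
proof -
  have "trace (Y ** Y ** Y) \<le> (\<Sum>j\<in>UNIV. norm Y * (column j Y \<bullet> column j Y))"
    unfolding trace_cube_eq[OF sY] by (rule sum_mono) (rule quad_bound)
  also have "\<dots> = norm Y * (Y \<bullet> Y)" by (simp add: sum_distrib_left[symmetric] cols_inner)
  also have "\<dots> = norm Y ^ 3" by (simp add: power2_norm_eq_inner[symmetric] power3_eq_cube power2_eq_square)
  finally show ?thesis .
qed

lemma trace1_pd:
  fixes M :: "real^'n^'n"
  assumes tr: "trace M = 1" and b: "\<beta>^2 < 1" and q: "(real CARD('n) - \<beta>^2) * (M \<bullet> M) < 1"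
    and x: "x \<noteq> 0"
  shows "x \<bullet> (M *v x) > 0"
proof (rule ccontr)
  assume "\<not> x \<bullet> (M *v x) > 0"
  then have m: "x \<bullet> (M *v x) \<le> 0" by simp
  define n where "n = real CARD('n)"
  define G where "G = (x \<bullet> x) *\<^sub>R mat 1 - outer x"
  have xx: "x \<bullet> x > 0" using x by simp
  have MG: "M \<bullet> G = (x \<bullet> x) - x \<bullet> (M *v x)"
    unfolding G_def by (simp add: inner_diff_right inner_outer inner_commute[of M] I_inner tr)
  have GG: "G \<bullet> G = (x \<bullet> x)^2 * (n - 1)"
    unfolding G_def n_def
    by (simp add: inner_diff_right inner_diff_left I_inner_I I_outer outer_outer inner_commute[of "outer x"] algebra_simps power2_eq_square)
  have cs: "(M \<bullet> G)^2 \<le> (M \<bullet> M) * (G \<bullet> G)"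
  proof -
    have "M \<bullet> G \<le> norm M * norm G" by (rule norm_cauchy_schwarz)
    moreover have "0 \<le> M \<bullet> G" using MG m xx by linarith
    ultimately have "(M \<bullet> G)^2 \<le> (norm M * norm G)^2" by (rule power_mono)
    then show ?thesis by (simp add: power_mult_distrib power2_norm_eq_inner)
  qed
  have n1: "n \<ge> 1" unfolding n_def by simp
  have MM: "M \<bullet> M \<ge> 0" by simp
  have "x \<bullet> x \<le> M \<bullet> G" using MG m by linarith
  then have "(x \<bullet> x)^2 \<le> (M \<bullet> G)^2" using xx by (intro power_mono) auto
  also have "\<dots> \<le> (M \<bullet> M) * ((x \<bullet> x)^2 * (n - 1))" using cs GG by simp
  finally have "(x \<bullet> x)^2 * 1 \<le> (x \<bullet> x)^2 * ((M \<bullet> M) * (n - 1))" by (simp add: mult_ac)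
  then have "1 \<le> (M \<bullet> M) * (n - 1)" using xx by (subst (asm) mult_le_cancel_left_pos) auto
  also have "\<dots> \<le> (M \<bullet> M) * (n - \<beta>^2)" using b MM by (intro mult_left_mono) auto
  finally show False using q n_def by (simp add: mult.commute)
qed

lemma cone_dual_a:
  fixes u y t :: "'a::real_inner"
  assumes nu: "u \<bullet> u = n" and b: "\<beta> > 0" and s: "s > 0" and sb: "s^2 + \<beta>^2 = n"
    and y: "u \<bullet> y \<ge> \<beta> * norm y" and t: "u \<bullet> t \<ge> s * norm t"
  shows "y \<bullet> t \<ge> 0"
proof -
  have n: "n > 0" using sb b s by (metis add_pos_pos zero_less_power)
  define a where "a = u \<bullet> y"
  define c where "c = u \<bullet> t"
  define y0 where "y0 = y - (a/n) *\<^sub>R u"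
  define t0 where "t0 = t - (c/n) *\<^sub>R u"
  have a0: "a \<ge> 0" using y b unfolding a_def by (meson mult_nonneg_nonneg norm_ge_zero order_trans less_imp_le)
  have c0: "c \<ge> 0" using t s unfolding c_def by (meson mult_nonneg_nonneg norm_ge_zero order_trans less_imp_le)
  have yt: "y \<bullet> t = a*c/n + y0 \<bullet> t0"
    unfolding y0_def t0_def using n
    by (simp add: inner_diff_left inner_diff_right a_def c_def nu inner_commute[of y u] field_simps)
  have yy: "y0 \<bullet> y0 = y \<bullet> y - a^2/n"
    unfolding y0_def using n
    by (simp add: inner_diff_left inner_diff_right a_def nu inner_commute[of y u] field_simps power2_eq_square)
  have tt: "t0 \<bullet> t0 = t \<bullet> t - c^2/n"
    unfolding t0_def using n
    by (simp add: inner_diff_left inner_diff_right c_def nu inner_commute[of t u] field_simps power2_eq_square)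
  have ny: "norm y \<le> a/\<beta>" using y b unfolding a_def by (simp add: field_simps mult.commute)
  have "y \<bullet> y \<le> (a/\<beta>)^2"
    using power_mono[OF ny norm_ge_zero, of 2] by (simp add: power2_norm_eq_inner)
  moreover have "a^2/\<beta>^2 - a^2/n = a^2 * s^2 / (n * \<beta>^2)"
  proof -
    have "a^2/\<beta>^2 - a^2/n = a^2 * (n - \<beta>^2) / (n * \<beta>^2)" using n b by (simp add: field_simps)
    also have "n - \<beta>^2 = s^2" using sb by simp
    finally show ?thesis .
  qed
  ultimately have y0b: "y0 \<bullet> y0 \<le> a^2 * s^2 / (n * \<beta>^2)"
    using yy by (simp add: power_divide)
  have nt: "norm t \<le> c/s" using t s unfolding c_def by (simp add: field_simps mult.commute)
  have "t \<bullet> t \<le> (c/s)^2"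
    using power_mono[OF nt norm_ge_zero, of 2] by (simp add: power2_norm_eq_inner)
  moreover have "c^2/s^2 - c^2/n = c^2 * \<beta>^2 / (n * s^2)"
  proof -
    have "c^2/s^2 - c^2/n = c^2 * (n - s^2) / (n * s^2)" using n s by (simp add: field_simps)
    also have "n - s^2 = \<beta>^2" using sb by simp
    finally show ?thesis .
  qed
  ultimately have t0b: "t0 \<bullet> t0 \<le> c^2 * \<beta>^2 / (n * s^2)"
    using tt by (simp add: power_divide)
  have "(y0 \<bullet> t0)^2 \<le> (y0 \<bullet> y0) * (t0 \<bullet> t0)" by (rule Cauchy_Schwarz_ineq)
  also have "\<dots> \<le> (a^2 * s^2 / (n * \<beta>^2)) * (c^2 * \<beta>^2 / (n * s^2))"
    using n by (intro mult_mono y0b t0b) auto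
  also have "\<dots> = (a*c/n)^2" using b s n by (simp add: field_simps power2_eq_square)
  finally have "\<bar>y0 \<bullet> t0\<bar>^2 \<le> (a*c/n)^2" by simp
  moreover have acn: "0 \<le> a*c/n" using a0 c0 n by simp
  ultimately have "\<bar>y0 \<bullet> t0\<bar> \<le> a*c/n" by (rule power2_le_imp_le)
  then show ?thesis using yt by linarith
qed

lemma cone_dual_b:
  fixes u t :: "'a::real_inner"
  assumes nu: "u \<bullet> u = n" and b: "\<beta> > 0" and s: "s > 0" and sb: "s^2 + \<beta>^2 = n"
    and H: "\<And>a b. u \<bullet> (a *\<^sub>R u + b *\<^sub>R t) \<ge> \<beta> * norm (a *\<^sub>R u + b *\<^sub>R t) \<Longrightarrow> (a *\<^sub>R u + b *\<^sub>R t) \<bullet> t \<ge> 0"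
  shows "u \<bullet> t \<ge> s * norm t"
proof -
  have n: "n > 0" using sb b s by (metis add_pos_pos zero_less_power)
  define c where "c = u \<bullet> t"
  define t0 where "t0 = t - (c/n) *\<^sub>R u"
  define d where "d = norm t0"
  have ut0: "u \<bullet> t0 = 0" unfolding t0_def c_def using n by (simp add: inner_diff_right nu)
  have tt: "t \<bullet> t = d^2 + c^2/n"
    unfolding d_def power2_norm_eq_inner t0_def using n
    by (simp add: inner_diff_left inner_diff_right c_def nu inner_commute[of t u] field_simps power2_eq_square)
  have t0t: "t0 \<bullet> t = d^2"
    unfolding d_def power2_norm_eq_inner t0_def using n
    by (simp add: inner_diff_left inner_diff_right c_def nu inner_commute[of t u] field_simps power2_eq_square)
  have nt2: "(norm t)^2 = d^2 + c^2/n" using tt by (simp add: power2_norm_eq_inner)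
  have sn: "s^2 \<le> n" using sb zero_le_power2[of \<beta>] by linarith
  show ?thesis
  proof (cases "d = 0")
    case True
    have "norm u = sqrt n" using nu by (simp add: norm_eq_sqrt_inner)
    have bn: "\<beta> \<le> sqrt n" using sb by (metis le_add_same_cancel2 real_le_rsqrt zero_le_power2)
    have "\<beta> * sqrt n \<le> sqrt n * sqrt n" using bn n by (intro mult_right_mono) auto
    then have "\<beta> * norm u \<le> sqrt n * sqrt n" using \<open>norm u = sqrt n\<close> by simp
    then have "u \<bullet> (1 *\<^sub>R u + 0 *\<^sub>R t) \<ge> \<beta> * norm (1 *\<^sub>R u + 0 *\<^sub>R t)" using n nu by simp
    from H[OF this] have c0: "c \<ge> 0" unfolding c_def by (simp add: inner_commute)
    have "n * (norm t)^2 = c^2" using nt2 True n by (simp add: field_simps)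
    moreover have "s^2 * (norm t)^2 \<le> n * (norm t)^2" using sn by (intro mult_right_mono) auto
    ultimately have "(s * norm t)^2 \<le> c^2" by (simp add: power_mult_distrib)
    moreover have "0 \<le> c" using c0 .
    ultimately have "s * norm t \<le> c" by (rule power2_le_imp_le)
    then show ?thesis unfolding c_def by simp
  next
    case False
    then have d: "d > 0" unfolding d_def by simp
    define \<mu> where "\<mu> = sqrt n * s / \<beta>"
    have mu0: "\<mu> > 0" unfolding \<mu>_def using n s b by simp
    have mu2: "\<mu>^2 = n * s^2 / \<beta>^2" unfolding \<mu>_def using n by (simp add: power_mult_distrib power_divide)
    define y where "y = (1 + \<mu> * c / (n * d)) *\<^sub>R u + (- \<mu> / d) *\<^sub>R t"
    have y_eq: "y = u - (\<mu> / d) *\<^sub>R t0"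
      unfolding y_def t0_def using n d by (simp add: algebra_simps scaleR_diff_right)
    have uy: "u \<bullet> y = n" unfolding y_eq by (simp add: inner_diff_right ut0 nu)
    have tt0: "t0 \<bullet> t0 = d * d" unfolding d_def by (simp add: power2_norm_eq_inner[symmetric] power2_eq_square)
    have yy: "y \<bullet> y = n + \<mu>^2"
      unfolding y_eq using d
      using tt0 by (simp add: inner_diff_left inner_diff_right ut0 nu inner_commute[of t0 u] field_simps power2_eq_square)
    have "n + \<mu>^2 = n * (s^2 + \<beta>^2) / \<beta>^2" using mu2 b by (simp add: field_simps)
    also have "\<dots> = (n/\<beta>)^2" unfolding sb by (simp add: power_divide power2_eq_square)
    finally have "n + \<mu>^2 = (n/\<beta>)^2" .
    then have ny: "norm y = n / \<beta>" using yy n b by (simp add: norm_eq_sqrt_inner)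
    have "u \<bullet> y \<ge> \<beta> * norm y" using ny uy b by simp
    then have "y \<bullet> t \<ge> 0" using H unfolding y_def by blast
    moreover have "y \<bullet> t = c - \<mu> * d"
      unfolding y_eq using d by (simp add: inner_diff_left t0t c_def power2_eq_square)
    ultimately have cmd: "c \<ge> \<mu> * d" by simp
    have "\<mu> * d > 0" using mu0 d by simp
    then have c0: "c \<ge> 0" using cmd by linarith
    have "(\<mu> * d)^2 \<le> c^2" using cmd mu0 d by (intro power_mono) auto
    then have "n * s^2 * d^2 \<le> c^2 * \<beta>^2" using mu2 b by (simp add: power_mult_distrib field_simps)
    then have e1: "s^2 * d^2 \<le> c^2 * \<beta>^2 / n" using n by (simp add: pos_le_divide_eq mult_ac)
    have e2: "(s * norm t)^2 = s^2*d^2 + s^2*c^2/n" using nt2 by (simp add: power_mult_distrib algebra_simps)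
    have "c^2*\<beta>^2 + s^2*c^2 = c^2 * (s^2 + \<beta>^2)" by (simp add: algebra_simps)
    also have "\<dots> = c^2 * n" using sb by simp
    finally have "(c^2*\<beta>^2 + s^2*c^2) / n = c^2" using n by simp
    then have e3: "c^2*\<beta>^2/n + s^2*c^2/n = c^2" by (simp add: add_divide_distrib)
    have "(s * norm t)^2 \<le> c^2" using e1 e2 e3 by linarith
    moreover have "0 \<le> c" using c0 .
    ultimately have "s * norm t \<le> c" by (rule power2_le_imp_le)
    then show ?thesis unfolding c_def by simp
  qed
qed

lemma cone_bd_c:
  fixes u t :: "'a::real_inner"
  assumes nu: "u \<bullet> u = n" and b: "\<beta> > 0" and s: "s > 0" and sb: "s^2 + \<beta>^2 = n"
    and eq: "u \<bullet> t = s * norm t" and dl: "\<delta> > 0"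
  shows "u \<bullet> (t - \<delta> *\<^sub>R u) < s * norm (t - \<delta> *\<^sub>R u)"
proof -
  have n: "n > 0" using sb b s by (metis add_pos_pos zero_less_power)
  define c where "c = u \<bullet> t"
  have lhs: "u \<bullet> (t - \<delta> *\<^sub>R u) = c - \<delta> * n" by (simp add: c_def inner_diff_right nu)
  have nn: "(norm (t - \<delta> *\<^sub>R u))^2 = (norm t)^2 - 2*\<delta>*c + \<delta>^2 * n"
    unfolding power2_norm_eq_inner by (simp add: power2_norm_eq_inner inner_diff_left inner_diff_right c_def nu inner_commute[of t u]
        power2_eq_square algebra_simps)
  show ?thesis
  proof (cases "c - \<delta> * n < 0")
    case True
    have "0 \<le> s * norm (t - \<delta> *\<^sub>R u)" using s by simp
    then show ?thesis using lhs True by linarith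
  next
    case False
    have "\<delta> * n > 0" using dl n by simp
    then have cpos: "c > 0" using False by linarith
    have sc: "s^2 * (norm t)^2 = c^2" using eq by (simp add: c_def power_mult_distrib)
    have "(c - \<delta>*n)^2 < s^2 * (norm (t - \<delta> *\<^sub>R u))^2"
    proof -
      have "s^2 * (norm (t - \<delta> *\<^sub>R u))^2 - (c - \<delta>*n)^2 = \<delta> * \<beta>^2 * (2*c - \<delta>*n)"
        unfolding nn sb[symmetric] using sc by (simp add: algebra_simps power2_eq_square)
      moreover have "\<delta> * \<beta>^2 * (2*c - \<delta>*n) > 0" using dl b cpos False by simp
      ultimately show ?thesis by simp
    qed
    then have "(c - \<delta>*n)^2 < (s * norm (t - \<delta> *\<^sub>R u))^2" by (simp add: power_mult_distrib)
    moreover have "0 \<le> s * norm (t - \<delta> *\<^sub>R u)" using s by simp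
    ultimately have "c - \<delta>*n < s * norm (t - \<delta> *\<^sub>R u)"
      by (rule power_less_imp_less_base)
    then show ?thesis using lhs by simp
  qed
qed

lemma cont_mmul:
  fixes f g :: "'a::topological_space \<Rightarrow> real^'n^'n"
  assumes "continuous_on S f" "continuous_on S g"
  shows "continuous_on S (\<lambda>x. f x ** g x)"
  unfolding matrix_matrix_mult_def using assms by (intro continuous_intros) auto

lemma cont_trace:
  fixes f :: "'a::topological_space \<Rightarrow> real^'n^'n"
  assumes "continuous_on S f"
  shows "continuous_on S (\<lambda>x. trace (f x))"
  unfolding trace_def using assms by (intro continuous_intros) auto

lemma mm_diff_left: "((A::real^'n^'n) - B) ** C = A ** C - B ** C"
  by (simp add: matrix_matrix_mult_def vec_eq_iff sum_subtractf left_diff_distrib)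
lemma mm_diff_right: "(A::real^'n^'n) ** (B - C) = A ** B - A ** C"
  by (simp add: matrix_matrix_mult_def vec_eq_iff sum_subtractf right_diff_distrib)
lemma mm_add_left: "((A::real^'n^'n) + B) ** C = A ** C + B ** C"
  by (simp add: matrix_matrix_mult_def vec_eq_iff sum.distrib distrib_right)
lemma mm_add_right: "(A::real^'n^'n) ** (B + C) = A ** B + A ** C"
  by (simp add: matrix_matrix_mult_def vec_eq_iff sum.distrib distrib_left)
lemma mm_scale_left: "(k *\<^sub>R (A::real^'n^'n)) ** B = k *\<^sub>R (A ** B)"
  by (simp add: matrix_matrix_mult_def vec_eq_iff sum_distrib_left mult.assoc)
lemma mm_scale_right: "(A::real^'n^'n) ** (k *\<^sub>R B) = k *\<^sub>R (A ** B)"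
  by (simp add: matrix_matrix_mult_def vec_eq_iff sum_distrib_left mult_ac)

lemma pd_W:
  fixes P :: "real^'n^'n"
  assumes P: "P \<in> pos_def"
  obtains W :: "real^'n^'n" where "transpose W ** P ** W = mat 1" "W ** transpose W ** P = mat 1"
    "P ** W ** transpose W = mat 1" "matrix_inv P = W ** transpose W"
proof -
  obtain W :: "real^'n^'n" where h1: "transpose W ** P ** W = mat 1" using pd_factor[OF P] by blast
  have "W ** (transpose W ** P) = mat 1" using h1 matrix_left_right_inverse by blast
  then have h2: "W ** transpose W ** P = mat 1" by (simp add: matrix_mul_assoc)
  then have h3': "P ** (W ** transpose W) = mat 1" using matrix_left_right_inverse by blast
  then have h3: "P ** W ** transpose W = mat 1" by (simp add: matrix_mul_assoc)
  show ?thesis using that h1 h2 h3 minv_eq[OF h3'] by blast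
qed

lemma rule_from_id:
  fixes A B C Z :: "real^'n^'n"
  assumes "A ** B ** C = mat 1"
  shows "Z ** A ** B ** C = Z"
proof -
  have "Z ** A ** B ** C = Z ** (A ** B ** C)" by (simp add: matrix_mul_assoc)
  then show ?thesis using assms by simp
qed

lemma trace_rot: "trace ((A::real^'n^'n) ** B) = trace (B ** A)"
  by (rule trace_mul_sym)

lemma sym_mats_iff: "X \<in> sym_mats \<longleftrightarrow> transpose X = X"
  by (simp add: sym_mats_def)

lemma dual_char_W:
  fixes P W S :: "real^'n^'n"
  assumes h1: "transpose W ** P ** W = mat 1" and h2: "W ** transpose W ** P = mat 1"
    and h3: "P ** W ** transpose W = mat 1" and h4: "matrix_inv P = W ** transpose W"
    and sP: "transpose P = P" and b: "0 < \<beta>" "\<beta> < 1" and sS: "transpose S = S"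
  shows "S \<in> dual_cone (coneK P \<beta>) \<longleftrightarrow>
    mat 1 \<bullet> (transpose W ** P ** S ** P ** W) \<ge> sqrt (real CARD('n) - \<beta>^2) * norm (transpose W ** P ** S ** P ** W)"
proof -
  define n where "n = real CARD('n)"
  define s where "s = sqrt (n - \<beta>^2)"
  define T where "T = transpose W ** P ** S ** P ** W"
  have n1: "n \<ge> 1" unfolding n_def by simp
  have b2: "\<beta>^2 < 1" using b by (simp add: power_less_one_iff abs_less_iff)
  have spos: "s > 0" unfolding s_def using n1 b2 by simp
  have sb: "s^2 + \<beta>^2 = n" unfolding s_def using n1 b2 by simp
  have nu: "mat 1 \<bullet> (mat 1 :: real^'n^'n) = n" unfolding n_def by (rule I_inner_I)
  have R1: "\<And>Z::real^'n^'n. Z ** transpose W ** P ** W = Z" by (rule rule_from_id[OF h1])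
  have R2: "\<And>Z::real^'n^'n. Z ** W ** transpose W ** P = Z" by (rule rule_from_id[OF h2])
  have R3: "\<And>Z::real^'n^'n. Z ** P ** W ** transpose W = Z" by (rule rule_from_id[OF h3])
  have sT: "transpose T = T" unfolding T_def
    by (simp add: matrix_transpose_mul sP sS matrix_mul_assoc)
  have keyX: "trace (matrix_inv P ** X) = mat 1 \<bullet> (transpose W ** X ** W)
      \<and> normE P X = norm (transpose W ** X ** W)
      \<and> trace (X ** S) = (transpose W ** X ** W) \<bullet> T
      \<and> transpose (transpose W ** X ** W) = transpose W ** X ** W"
    if sX: "transpose X = X" for X
  proof (intro conjI)
    define Y where "Y = transpose W ** X ** W"
    show sY: "transpose (transpose W ** X ** W) = transpose W ** X ** W"
      by (simp add: matrix_transpose_mul sX matrix_mul_assoc)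
    have "mat 1 \<bullet> (transpose W ** X ** W) = trace (transpose W ** (X ** W))"
      by (simp add: I_inner matrix_mul_assoc)
    also have "\<dots> = trace ((X ** W) ** transpose W)" by (rule trace_rot)
    also have "\<dots> = trace (X ** (W ** transpose W))" by (simp add: matrix_mul_assoc)
    also have "\<dots> = trace ((W ** transpose W) ** X)" by (rule trace_rot)
    also have "\<dots> = trace (matrix_inv P ** X)" by (simp add: h4)
    finally show "trace (matrix_inv P ** X) = mat 1 \<bullet> (transpose W ** X ** W)" by simp
    have "trace (Y ** Y) = trace (transpose W ** (X ** W ** transpose W ** X ** W))"
      unfolding Y_def by (simp add: matrix_mul_assoc)
    also have "\<dots> = trace ((X ** W ** transpose W ** X ** W) ** transpose W)" by (rule trace_rot)
    also have "\<dots> = trace (X ** (W ** transpose W ** X ** W ** transpose W))" by (simp add: matrix_mul_assoc)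
    also have "\<dots> = trace ((W ** transpose W ** X ** W ** transpose W) ** X)" by (rule trace_rot)
    also have "\<dots> = trace ((matrix_inv P ** X) ** (matrix_inv P ** X))"
      by (simp add: h4 matrix_mul_assoc)
    finally have "trace ((matrix_inv P ** X) ** (matrix_inv P ** X)) = Y \<bullet> Y"
      using frob_sym[of Y Y] sY unfolding Y_def by simp
    then show "normE P X = norm (transpose W ** X ** W)"
      unfolding normE_def Y_def by (simp add: norm_eq_sqrt_inner)
    have "Y \<bullet> T = trace (Y ** T)" using frob_sym[of Y T] sY unfolding Y_def by simp
    also have "\<dots> = trace (transpose W ** X ** W ** transpose W ** P ** S ** P ** W)"
      unfolding Y_def T_def by (simp add: matrix_mul_assoc)
    also have "\<dots> = trace (transpose W ** X ** S ** P ** W)" by (simp add: R2)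
    also have "\<dots> = trace (transpose W ** (X ** S ** P ** W))" by (simp add: matrix_mul_assoc)
    also have "\<dots> = trace ((X ** S ** P ** W) ** transpose W)" by (rule trace_rot)
    also have "\<dots> = trace (X ** S)" by (simp add: R3)
    finally show "trace (X ** S) = (transpose W ** X ** W) \<bullet> T" unfolding Y_def by simp
  qed
  have surj: "transpose W ** (P ** W ** Y ** transpose W ** P) ** W = Y" for Y
  proof -
    have "transpose W ** (P ** W ** Y ** transpose W ** P) ** W = transpose W ** P ** W ** Y ** transpose W ** P ** W"
      by (simp add: matrix_mul_assoc)
    also have "\<dots> = Y" by (simp add: h1 R1)
    finally show ?thesis .
  qed
  have symX': "transpose (P ** W ** Y ** transpose W ** P) = P ** W ** Y ** transpose W ** P"
    if "transpose Y = Y" for Y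
    using that by (simp add: matrix_transpose_mul sP matrix_mul_assoc)
  have D_iff: "S \<in> dual_cone (coneK P \<beta>) \<longleftrightarrow>
      (\<forall>Y::real^'n^'n. transpose Y = Y \<longrightarrow> mat 1 \<bullet> Y \<ge> \<beta> * norm Y \<longrightarrow> Y \<bullet> T \<ge> 0)"
  proof
    assume S: "S \<in> dual_cone (coneK P \<beta>)"
    show "\<forall>Y::real^'n^'n. transpose Y = Y \<longrightarrow> mat 1 \<bullet> Y \<ge> \<beta> * norm Y \<longrightarrow> Y \<bullet> T \<ge> 0"
    proof (intro allI impI)
      fix Y :: "real^'n^'n" assume sY: "transpose Y = Y" and c: "mat 1 \<bullet> Y \<ge> \<beta> * norm Y"
      define X where "X = P ** W ** Y ** transpose W ** P"
      have sX: "transpose X = X" unfolding X_def by (rule symX'[OF sY])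
      have YX: "transpose W ** X ** W = Y" unfolding X_def by (rule surj)
      have "X \<in> coneK P \<beta>" unfolding coneK_def using keyX[OF sX] YX c sX
        by (simp add: sym_mats_iff)
      then have "trace (X ** S) \<ge> 0" using S unfolding dual_cone_def by blast
      then show "Y \<bullet> T \<ge> 0" using keyX[OF sX] YX by simp
    qed
  next
    assume H: "\<forall>Y::real^'n^'n. transpose Y = Y \<longrightarrow> mat 1 \<bullet> Y \<ge> \<beta> * norm Y \<longrightarrow> Y \<bullet> T \<ge> 0"
    show "S \<in> dual_cone (coneK P \<beta>)"
      unfolding dual_cone_def
    proof (intro CollectI conjI ballI)
      show "S \<in> sym_mats" using sS by (simp add: sym_mats_iff)
      fix X assume "X \<in> coneK P \<beta>"
      then have sX: "transpose X = X" and c: "trace (matrix_inv P ** X) \<ge> \<beta> * normE P X"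
        unfolding coneK_def by (auto simp: sym_mats_iff)
      show "trace (X ** S) \<ge> 0" using H keyX[OF sX] c by simp
    qed
  qed
  show ?thesis
    unfolding T_def[symmetric] n_def[symmetric] s_def[symmetric] D_iff
  proof
    assume H: "\<forall>Y::real^'n^'n. transpose Y = Y \<longrightarrow> mat 1 \<bullet> Y \<ge> \<beta> * norm Y \<longrightarrow> Y \<bullet> T \<ge> 0"
    show "mat 1 \<bullet> T \<ge> s * norm T"
    proof (rule cone_dual_b[OF nu b(1) spos sb])
      fix a c :: real
      assume "mat 1 \<bullet> (a *\<^sub>R mat 1 + c *\<^sub>R T) \<ge> \<beta> * norm (a *\<^sub>R mat 1 + c *\<^sub>R T)"
      moreover have "transpose (a *\<^sub>R mat 1 + c *\<^sub>R T) = a *\<^sub>R mat 1 + c *\<^sub>R T"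
        using sT by (simp add: transpose_def vec_eq_iff mat_def)
      ultimately show "(a *\<^sub>R mat 1 + c *\<^sub>R T) \<bullet> T \<ge> 0" using H by blast
    qed
  next
    assume t: "mat 1 \<bullet> T \<ge> s * norm T"
    show "\<forall>Y::real^'n^'n. transpose Y = Y \<longrightarrow> mat 1 \<bullet> Y \<ge> \<beta> * norm Y \<longrightarrow> Y \<bullet> T \<ge> 0"
      using cone_dual_a[OF nu b(1) spos sb _ t] by blast
  qed
qed

lemma dual_int:
  fixes P S :: "real^'n^'n"
  assumes P: "P \<in> pos_def" and b: "0 < \<beta>" "\<beta> < 1" and sS: "transpose S = S"
  shows "S \<in> sym_top interior_of dual_cone (coneK P \<beta>) \<longleftrightarrow>
    trace (P ** S) > sqrt (real CARD('n) - \<beta>^2) * sqrt (trace ((P ** S) ** (P ** S)))"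
proof -
  obtain W :: "real^'n^'n" where h1: "transpose W ** P ** W = mat 1" and h2: "W ** transpose W ** P = mat 1"
    and h3: "P ** W ** transpose W = mat 1" and h4: "matrix_inv P = W ** transpose W"
    using pd_W[OF P] by blast
  have sP: "transpose P = P" using P unfolding pos_def_def by auto
  define n where "n = real CARD('n)"
  define s where "s = sqrt (n - \<beta>^2)"
  define T where "T = (\<lambda>Z. transpose W ** P ** Z ** P ** W)"
  define D where "D = dual_cone (coneK P \<beta>)"
  have n1: "n \<ge> 1" unfolding n_def by simp
  have b2: "\<beta>^2 < 1" using b by (simp add: power_less_one_iff abs_less_iff)
  have spos: "s > 0" unfolding s_def using n1 b2 by simp
  have sb: "s^2 + \<beta>^2 = n" unfolding s_def using n1 b2 by simp
  have nu: "mat 1 \<bullet> (mat 1 :: real^'n^'n) = n" unfolding n_def by (rule I_inner_I)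
  have R1: "\<And>Z::real^'n^'n. Z ** transpose W ** P ** W = Z" by (rule rule_from_id[OF h1])
  have R3: "\<And>Z::real^'n^'n. Z ** P ** W ** transpose W = Z" by (rule rule_from_id[OF h3])
  have Dc: "Z \<in> D \<longleftrightarrow> mat 1 \<bullet> T Z \<ge> s * norm (T Z)" if "transpose Z = Z" for Z
    unfolding D_def T_def s_def n_def using dual_char_W[OF h1 h2 h3 h4 sP b that] by simp
  have trT: "mat 1 \<bullet> T S = trace (P ** S)"
  proof -
    have "mat 1 \<bullet> T S = trace (transpose W ** (P ** S ** P ** W))"
      unfolding T_def by (simp add: I_inner matrix_mul_assoc)
    also have "\<dots> = trace ((P ** S ** P ** W) ** transpose W)" by (rule trace_rot)
    also have "\<dots> = trace (P ** S)" by (simp add: R3)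
    finally show ?thesis .
  qed
  have sT: "transpose (T S) = T S" unfolding T_def
    by (simp add: matrix_transpose_mul sP sS matrix_mul_assoc)
  have TT: "T S \<bullet> T S = trace ((P ** S) ** (P ** S))"
  proof -
    have "T S \<bullet> T S = trace (T S ** T S)" using frob_sym[OF sT] by simp
    also have "\<dots> = trace (transpose W ** P ** S ** P ** W ** transpose W ** P ** S ** P ** W)"
      unfolding T_def by (simp add: matrix_mul_assoc)
    also have "\<dots> = trace (transpose W ** P ** S ** P ** S ** P ** W)" by (simp add: R3)
    also have "\<dots> = trace (transpose W ** (P ** S ** P ** S ** P ** W))" by (simp add: matrix_mul_assoc)
    also have "\<dots> = trace ((P ** S ** P ** S ** P ** W) ** transpose W)" by (rule trace_rot)
    also have "\<dots> = trace ((P ** S) ** (P ** S))" by (simp add: R3 matrix_mul_assoc)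
    finally show ?thesis .
  qed
  have nT: "norm (T S) = sqrt (trace ((P ** S) ** (P ** S)))" by (simp add: norm_eq_sqrt_inner TT)
  have contT: "continuous_on UNIV T" unfolding T_def
    by (intro cont_mmul continuous_on_const continuous_on_id)
  have RHS: "trace (P ** S) > sqrt (real CARD('n) - \<beta>^2) * sqrt (trace ((P ** S) ** (P ** S)))
      \<longleftrightarrow> mat 1 \<bullet> T S > s * norm (T S)"
    unfolding trT nT s_def n_def by simp
  show ?thesis
    unfolding RHS D_def[symmetric]
  proof
    assume "S \<in> sym_top interior_of D"
    then obtain U where oU: "openin sym_top U" and SU: "S \<in> U" and UD: "U \<subseteq> D"
      unfolding interior_of_def by blast
    then obtain Op where oO: "open Op" and UO: "U = sym_mats \<inter> Op"
      unfolding sym_top_def openin_open by blast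
    have "S \<in> Op" using SU UO by blast
    then obtain e where e: "e > 0" and bO: "ball S e \<subseteq> Op" using oO open_contains_ball by blast
    show "mat 1 \<bullet> T S > s * norm (T S)"
    proof (rule ccontr)
      assume nl: "\<not> mat 1 \<bullet> T S > s * norm (T S)"
      have "S \<in> D" using SU UD by blast
      then have "mat 1 \<bullet> T S \<ge> s * norm (T S)" using Dc[OF sS] by simp
      then have eq: "mat 1 \<bullet> T S = s * norm (T S)" using nl by simp
      define Pi where "Pi = matrix_inv P"
      have sPi: "transpose Pi = Pi" unfolding Pi_def h4 by (simp add: matrix_transpose_mul)
      define \<delta> where "\<delta> = e / (2 * (norm Pi + 1))"
      have dpos: "\<delta> > 0" unfolding \<delta>_def using e by (simp add: add_nonneg_pos)
      have "\<delta> * norm Pi < e"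
      proof -
        have "\<delta> * norm Pi \<le> \<delta> * (norm Pi + 1)" using dpos by simp
        also have "\<dots> = e / 2"
        proof -
          have np: "norm Pi + 1 > 0" by (simp add: add_nonneg_pos)
          show ?thesis unfolding \<delta>_def using np by (simp add: field_simps)
        qed
        finally show ?thesis using e by simp
      qed
      define Z where "Z = S - \<delta> *\<^sub>R Pi"
      have sZ: "transpose Z = Z" unfolding Z_def using sS sPi
        by (simp add: transpose_def vec_eq_iff)
      have "dist Z S = \<delta> * norm Pi" unfolding Z_def dist_norm using dpos by simp
      then have "Z \<in> ball S e" using \<open>\<delta> * norm Pi < e\<close> by (simp add: dist_commute)
      then have "Z \<in> U" using bO UO sZ by (auto simp: sym_mats_iff)
      then have ZD: "mat 1 \<bullet> T Z \<ge> s * norm (T Z)" using UD Dc[OF sZ] by blast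
      have TPi: "transpose W ** P ** Pi ** P ** W = mat 1"
      proof -
        have "transpose W ** P ** Pi ** P ** W = transpose W ** P ** W ** transpose W ** P ** W"
          unfolding Pi_def h4 by (simp add: matrix_mul_assoc)
        also have "\<dots> = mat 1" by (simp add: R1 h1)
        finally show ?thesis .
      qed
      have TZ: "T Z = T S - \<delta> *\<^sub>R mat 1"
        unfolding T_def Z_def
        by (simp add: mm_diff_left mm_diff_right mm_scale_left mm_scale_right TPi)
      have "mat 1 \<bullet> (T S - \<delta> *\<^sub>R mat 1) < s * norm (T S - \<delta> *\<^sub>R mat 1)"
        by (rule cone_bd_c[OF nu b(1) spos sb eq dpos])
      then show False using ZD TZ by simp
    qed
  next
    assume st: "mat 1 \<bullet> T S > s * norm (T S)"
    define U where "U = sym_mats \<inter> {Z. s * norm (T Z) < mat 1 \<bullet> T Z}"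
    have "open {Z. s * norm (T Z) < mat 1 \<bullet> T Z}"
      by (intro open_Collect_less continuous_intros contT)
    then have oU: "openin sym_top U" unfolding U_def sym_top_def openin_open by blast
    have UD: "U \<subseteq> D"
    proof
      fix Z assume "Z \<in> U"
      then have "transpose Z = Z" "s * norm (T Z) < mat 1 \<bullet> T Z" unfolding U_def by (auto simp: sym_mats_iff)
      then show "Z \<in> D" using Dc by simp
    qed
    have "S \<in> U" unfolding U_def using st sS by (simp add: sym_mats_iff)
    then show "S \<in> sym_top interior_of D" unfolding interior_of_def using oU UD by blast
  qed
qed

lemma frontier_eq:
  fixes E X :: "real^'n^'n"
  assumes X: "X \<in> sym_top frontier_of (coneK E \<alpha>)"
  shows "transpose X = X \<and> trace (matrix_inv E ** X) = \<alpha> * normE E X"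
proof -
  define g where "g = (\<lambda>Z. trace (matrix_inv E ** Z) - \<alpha> * normE E Z)"
  have cg: "continuous_on UNIV g" unfolding g_def normE_def
    by (intro continuous_intros cont_trace cont_mmul continuous_on_const continuous_on_id)
  have Keq: "coneK E \<alpha> = sym_mats \<inter> {Z. 0 \<le> g Z}" unfolding coneK_def g_def by auto
  have "closed {Z. 0 \<le> g Z}" by (intro closed_Collect_le cg continuous_on_const)
  then have "closedin sym_top (coneK E \<alpha>)" unfolding sym_top_def closedin_closed Keq by blast
  then have cl: "sym_top closure_of (coneK E \<alpha>) = coneK E \<alpha>" by (rule closure_of_closedin)
  have XK: "X \<in> coneK E \<alpha>" and Xi: "X \<notin> sym_top interior_of (coneK E \<alpha>)"
    using X cl unfolding frontier_of_def by auto
  then have sX: "transpose X = X" and g0: "g X \<ge> 0" unfolding Keq by (auto simp: sym_mats_iff)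
  have "\<not> g X > 0"
  proof
    assume gp: "g X > 0"
    define U where "U = sym_mats \<inter> {Z. 0 < g Z}"
    have "open {Z. 0 < g Z}" by (intro open_Collect_less cg continuous_on_const)
    then have oU: "openin sym_top U" unfolding U_def sym_top_def openin_open by blast
    have "U \<subseteq> coneK E \<alpha>" unfolding U_def Keq by auto
    moreover have "X \<in> U" unfolding U_def using gp sX by (simp add: sym_mats_iff)
    ultimately have "X \<in> sym_top interior_of (coneK E \<alpha>)" unfolding interior_of_def using oU by blast
    then show False using Xi by simp
  qed
  then show ?thesis using sX g0 unfolding g_def by simp
qed

lemma transpose_diff: "transpose ((A::real^'n^'n) - B) = transpose A - transpose B"
  by (simp add: transpose_def vec_eq_iff)
lemma transpose_add: "transpose ((A::real^'n^'n) + B) = transpose A + transpose B"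
  by (simp add: transpose_def vec_eq_iff)

lemma invertible_imp:
  fixes W :: "real^'n^'n"
  assumes "invertible W"
  shows "W ** matrix_inv W = mat 1" "matrix_inv W ** W = mat 1"
proof -
  obtain B where "W ** B = mat 1" using assms invertible_right_inverse by blast
  then show "W ** matrix_inv W = mat 1" "matrix_inv W ** W = mat 1"
    using minv_eq matrix_left_right_inverse by auto
qed

lemma pd_sqrt:
  fixes P :: "real^'n^'n"
  assumes P: "P \<in> pos_def"
  obtains R :: "real^'n^'n" where "invertible R" "P = R ** transpose R"
proof -
  obtain W :: "real^'n^'n" where h1: "transpose W ** P ** W = mat 1" and h2: "W ** transpose W ** P = mat 1"
    using pd_W[OF P] by blast
  have "W ** (transpose W ** P) = mat 1" using h2 by (simp add: matrix_mul_assoc)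
  then have iW: "invertible W" using invertible_right_inverse by blast
  define Wi where "Wi = matrix_inv W"
  have WWi: "W ** Wi = mat 1" and WiW: "Wi ** W = mat 1" unfolding Wi_def using invertible_imp[OF iW] by auto
  have iWi: "invertible Wi" using WiW invertible_right_inverse by blast
  have "transpose Wi ** (transpose W ** P ** W) ** Wi = (transpose Wi ** transpose W) ** P ** (W ** Wi)"
    by (simp add: matrix_mul_assoc)
  also have "\<dots> = P" by (simp add: matrix_transpose_mul[symmetric] WWi)
  finally have "P = transpose Wi ** Wi" using h1 by simp
  then show ?thesis using that[of "transpose Wi"] transpose_invertible[OF iWi] by simp
qed

lemma pd_from_congr:
  fixes R N :: "real^'n^'n"
  assumes iR: "invertible R" and sN: "transpose N = N"
    and pos: "\<And>z. z \<noteq> 0 \<Longrightarrow> z \<bullet> ((transpose R ** N ** R) *v z) > 0"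
  shows "N \<in> pos_def"
  unfolding pos_def_def
proof (intro CollectI conjI allI impI)
  show "transpose N = N" by (rule sN)
  fix x :: "real^'n" assume x: "x \<noteq> 0"
  define z where "z = matrix_inv R *v x"
  have Rz: "R *v z = x" unfolding z_def using invertible_imp[OF iR] by (simp add: matrix_vector_mul_assoc)
  have z: "z \<noteq> 0" using Rz x by auto
  have "z \<bullet> ((transpose R ** N ** R) *v z) = z \<bullet> (transpose R *v (N *v (R *v z)))"
    by (simp add: matrix_vector_mul_assoc matrix_mul_assoc)
  also have "\<dots> = (R *v z) \<bullet> (N *v (R *v z))"
    using inner_matvec_transpose[of z "transpose R" "N *v (R *v z)"] by simp
  finally show "x \<bullet> (N *v x) > 0" using pos[OF z] Rz by simp
qed

lemma pd_scale:
  assumes "N \<in> pos_def" "c > 0"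
  shows "c *\<^sub>R N \<in> pos_def"
  using assms unfolding pos_def_def
  by (auto simp: transpose_scalar scaleR_matrix_vector_assoc[symmetric])

lemma quad_trace:
  fixes A B :: "real^'n^'n"
  shows "trace ((A + t *\<^sub>R B) ** (A + t *\<^sub>R B)) = trace (A ** A) + 2*t*trace (B ** A) + t^2 * trace (B ** B)"
  by (simp add: mm_add_left mm_add_right mm_scale_left mm_scale_right trace_add trace_scaleR
      trace_rot[of A B]) (simp add: power2_eq_square algebra_simps)

lemma tr_aff1:
  fixes A :: "real^'n^'n"
  shows "trace ((c *\<^sub>R (mat 1 - k *\<^sub>R A)) ** (c *\<^sub>R (mat 1 - k *\<^sub>R A)))
     = c^2 * (real CARD('n) - 2*k*trace A + k^2 * trace (A ** A))"
  by (simp add: mm_diff_left mm_diff_right mm_scale_left mm_scale_right trace_add trace_sub trace_scaleR trace_I)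
     (simp add: power2_eq_square algebra_simps)

lemma tr_aff2:
  fixes A :: "real^'n^'n"
  shows "trace ((c *\<^sub>R (A - k *\<^sub>R (A ** A))) ** (c *\<^sub>R (mat 1 - k *\<^sub>R A)))
     = c^2 * (trace A - 2*k*trace (A ** A) + k^2 * trace (A ** A ** A))"
  by (simp add: mm_diff_left mm_diff_right mm_scale_left mm_scale_right trace_add trace_sub trace_scaleR
      matrix_mul_assoc) (simp add: power2_eq_square algebra_simps)

lemma qf_S:
  fixes A B :: "real^'n^'n"
  shows "x \<bullet> ((c *\<^sub>R (A - k *\<^sub>R B)) *v x) = c * (x \<bullet> (A *v x) - k * (x \<bullet> (B *v x)))"
  by (simp add: scaleR_matrix_vector_assoc[symmetric] matrix_vector_mult_diff_rdistrib inner_diff_right)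

lemma trS_R:
  fixes N R S :: "real^'n^'n"
  assumes SR: "S = R ** transpose R" and sN: "transpose N = N"
  shows "trace ((N ** S) ** (N ** S)) = (transpose R ** N ** R) \<bullet> (transpose R ** N ** R)"
    and "trace (transpose R ** N ** R) = trace (N ** S)"
    and "transpose (transpose R ** N ** R) = transpose R ** N ** R"
proof -
  show sM: "transpose (transpose R ** N ** R) = transpose R ** N ** R"
    by (simp add: matrix_transpose_mul sN matrix_mul_assoc)
  have "trace ((N ** S) ** (N ** S)) = trace ((N ** R ** transpose R ** N ** R) ** transpose R)"
    unfolding SR by (simp add: matrix_mul_assoc)
  also have "\<dots> = trace (transpose R ** (N ** R ** transpose R ** N ** R))" by (rule trace_rot)
  also have "\<dots> = trace ((transpose R ** N ** R) ** (transpose R ** N ** R))" by (simp add: matrix_mul_assoc)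
  also have "\<dots> = (transpose R ** N ** R) \<bullet> (transpose R ** N ** R)" by (rule frob_sym[OF sM])
  finally show "trace ((N ** S) ** (N ** S)) = (transpose R ** N ** R) \<bullet> (transpose R ** N ** R)" .
  have "trace (transpose R ** N ** R) = trace (transpose R ** (N ** R))" by (simp add: matrix_mul_assoc)
  also have "\<dots> = trace ((N ** R) ** transpose R)" by (rule trace_rot)
  also have "\<dots> = trace (N ** S)" unfolding SR by (simp add: matrix_mul_assoc)
  finally show "trace (transpose R ** N ** R) = trace (N ** S)" .
qed

theorem proposition4p5:
  fixes E X :: "real^'n^'n" and \<alpha> :: real
  assumes "E \<in> pos_def" and "0 < \<alpha>" and "\<alpha> < 1"
    and "X \<noteq> 0" and "X \<in> sym_top frontier_of (coneK E \<alpha>)"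
  shows "let n = real CARD('n);
             Ei = matrix_inv E;
             S = (1 / (n - \<alpha>\<^sup>2)) *\<^sub>R (Ei - (\<alpha>\<^sup>2 / trace (Ei ** X)) *\<^sub>R (Ei ** X ** Ei));
             q = (\<lambda>t::real. trace (((E + t *\<^sub>R X) ** S) ** ((E + t *\<^sub>R X) ** S)));
             Et = (\<lambda>t::real. (1 / (1 + t)) *\<^sub>R (E + t *\<^sub>R X))
         in (\<forall>\<beta> t. 0 < \<beta> \<longrightarrow> \<beta> < 1 \<longrightarrow> t > -1 \<longrightarrow>
                 ((Et t \<in> pos_def \<and> S \<in> sym_top interior_of (dual_cone (coneK (Et t) \<beta>)))
                  \<longleftrightarrow> q t < 1 / (n - \<beta>\<^sup>2)))
            \<and> strict_convex_on UNIV q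
            \<and> q 0 = 1 / (n - \<alpha>\<^sup>2)
            \<and> (\<exists>d. (q has_real_derivative d) (at 0) \<and> d < 0)"
proof -
  define n where "n = real CARD('n)"
  define Ei where "Ei = matrix_inv E"
  have sE: "transpose E = E" using assms(1) unfolding pos_def_def by auto
  obtain W :: "real^'n^'n" where h1: "transpose W ** E ** W = mat 1" and h2: "W ** transpose W ** E = mat 1"
    and h3: "E ** W ** transpose W = mat 1" and h4: "matrix_inv E = W ** transpose W"
    using pd_W[OF assms(1)] by blast
  have EiW: "Ei = W ** transpose W" using h4 Ei_def by simp
  have R2: "\<And>Z::real^'n^'n. Z ** W ** transpose W ** E = Z" by (rule rule_from_id[OF h2])
  have EEi: "E ** Ei = mat 1" using h3 unfolding EiW by (simp add: matrix_mul_assoc)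
  have sEi: "transpose Ei = Ei" unfolding EiW by (simp add: matrix_transpose_mul)
  have fr: "transpose X = X \<and> trace (Ei ** X) = \<alpha> * normE E X"
    using frontier_eq[OF assms(5)] unfolding Ei_def .
  then have sX: "transpose X = X" and bd: "trace (Ei ** X) = \<alpha> * normE E X" by auto
  define Y where "Y = transpose W ** X ** W"
  have sY: "transpose Y = Y" unfolding Y_def by (simp add: matrix_transpose_mul sX matrix_mul_assoc)
  have XY: "X = E ** W ** Y ** transpose W ** E"
    unfolding Y_def by (simp add: matrix_mul_assoc h3 R2)
  have Ynz: "Y \<noteq> 0"
  proof
    assume "Y = 0"
    then have "X = 0" using XY by simp
    then show False using assms(4) by simp
  qed
  define \<nu> where "\<nu> = norm Y"
  have nu_pos: "\<nu> > 0" unfolding \<nu>_def using Ynz by simp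
  have tr2: "trace ((Ei ** X) ** (Ei ** X)) = \<nu>^2"
  proof -
    have "trace ((Ei ** X) ** (Ei ** X)) = trace (W ** (transpose W ** X ** W ** transpose W ** X))"
      unfolding EiW by (simp add: matrix_mul_assoc)
    also have "\<dots> = trace ((transpose W ** X ** W ** transpose W ** X) ** W)" by (rule trace_rot)
    also have "\<dots> = trace (Y ** Y)" unfolding Y_def by (simp add: matrix_mul_assoc)
    also have "\<dots> = Y \<bullet> Y" by (rule frob_sym[OF sY])
    finally show ?thesis unfolding \<nu>_def by (simp add: power2_norm_eq_inner)
  qed
  have normEX: "normE E X = \<nu>"
    unfolding normE_def Ei_def[symmetric] tr2 using nu_pos by simp
  define \<tau> where "\<tau> = trace (Ei ** X)"
  have tau: "\<tau> = \<alpha> * \<nu>" unfolding \<tau>_def using bd normEX by simp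
  have tau_pos: "\<tau> > 0" unfolding tau using assms(2) nu_pos by simp
  have tXEi: "trace (X ** Ei) = \<tau>" unfolding \<tau>_def by (rule trace_rot)
  have tAA: "trace ((X ** Ei) ** (X ** Ei)) = \<nu>^2"
  proof -
    have "trace ((X ** Ei) ** (X ** Ei)) = trace (X ** (Ei ** X ** Ei))" by (simp add: matrix_mul_assoc)
    also have "\<dots> = trace ((Ei ** X ** Ei) ** X)" by (rule trace_rot)
    also have "\<dots> = trace ((Ei ** X) ** (Ei ** X))" by (simp add: matrix_mul_assoc)
    finally show ?thesis using tr2 by simp
  qed
  have tAAA: "trace ((X ** Ei) ** (X ** Ei) ** (X ** Ei)) \<le> \<nu>^3"
  proof -
    have "trace ((X ** Ei) ** (X ** Ei) ** (X ** Ei))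
        = trace ((X ** W ** transpose W ** X ** W ** transpose W ** X ** W) ** transpose W)"
      unfolding EiW by (simp add: matrix_mul_assoc)
    also have "\<dots> = trace (transpose W ** (X ** W ** transpose W ** X ** W ** transpose W ** X ** W))"
      by (rule trace_rot)
    also have "\<dots> = trace (Y ** Y ** Y)" unfolding Y_def by (simp add: matrix_mul_assoc)
    also have "\<dots> \<le> \<nu>^3" unfolding \<nu>_def by (rule trace_cube_le[OF sY])
    finally show ?thesis .
  qed
  have n1: "n \<ge> 1" unfolding n_def by simp
  have a2: "\<alpha>^2 < 1" using assms(2,3) by (simp add: power_less_one_iff abs_less_iff)
  have npos: "n - \<alpha>^2 > 0" using n1 a2 by simp
  define c where "c = 1 / (n - \<alpha>^2)"
  define k where "k = \<alpha>^2 / \<tau>"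
  have c_pos: "c > 0" unfolding c_def using npos by simp
  have cn: "c * (n - \<alpha>^2) = 1" unfolding c_def using npos by simp
  have ktau: "k * \<tau> = \<alpha>^2" unfolding k_def using tau_pos by simp
  have knu: "k * \<nu> = \<alpha>" unfolding k_def tau using assms(2) nu_pos by (simp add: power2_eq_square)
  have knu2: "k * \<nu>^2 = \<tau>" unfolding tau using knu by (simp add: power2_eq_square mult.assoc[symmetric])
  define S where "S = c *\<^sub>R (Ei - k *\<^sub>R (Ei ** X ** Ei))"
  have sS: "transpose S = S" unfolding S_def
    by (simp add: transpose_scalar transpose_diff matrix_transpose_mul sEi sX matrix_mul_assoc)
  have ES: "E ** S = c *\<^sub>R (mat 1 - k *\<^sub>R (X ** Ei))"
    unfolding S_def by (simp add: mm_diff_right mm_scale_right matrix_mul_assoc EEi)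
  have XS: "X ** S = c *\<^sub>R ((X ** Ei) - k *\<^sub>R ((X ** Ei) ** (X ** Ei)))"
    unfolding S_def by (simp add: mm_diff_right mm_scale_right matrix_mul_assoc)
  have trES: "trace (E ** S) = 1"
    unfolding ES using cn ktau by (simp add: trace_scaleR trace_sub trace_I tXEi n_def)
  have trXS: "trace (X ** S) = 0"
    unfolding XS using knu2 by (simp add: trace_scaleR trace_sub tXEi tAA)
  have iW: "invertible W"
  proof -
    have "W ** (transpose W ** E) = mat 1" using h2 by (simp add: matrix_mul_assoc)
    then show ?thesis using invertible_right_inverse by blast
  qed
  have S_pd: "S \<in> pos_def"
    unfolding pos_def_def
  proof (intro CollectI conjI allI impI)
    show "transpose S = S" by (rule sS)
    fix x :: "real^'n" assume x: "x \<noteq> 0"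
    define z where "z = transpose W *v x"
    have z: "z \<noteq> 0"
    proof
      assume z0: "z = 0"
      have "x = (E ** W ** transpose W) *v x" using h3 by simp
      also have "\<dots> = (E ** W) *v z" unfolding z_def by (simp add: matrix_vector_mul_assoc del: transpose_matrix_vector)
      finally show False using x z0 by simp
    qed
    have e: "x \<bullet> (W *v v) = (transpose W *v x) \<bullet> v" for v by (rule inner_matvec_transpose)
    note e' = e[unfolded z_def[symmetric]]
    have q1: "x \<bullet> (Ei *v x) = z \<bullet> z"
    proof -
      have "Ei *v x = W *v z" unfolding EiW z_def by (simp add: matrix_vector_mul_assoc del: transpose_matrix_vector)
      then show ?thesis using e' by simp
    qed
    have q2: "x \<bullet> ((Ei ** X ** Ei) *v x) = z \<bullet> (Y *v z)"
    proof -
      have "(Ei ** X ** Ei) *v x = W *v (Y *v z)" unfolding EiW z_def Y_def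
        by (simp add: matrix_vector_mul_assoc matrix_mul_assoc del: transpose_matrix_vector)
      then show ?thesis using e' by simp
    qed
    have "z \<bullet> (Y *v z) \<le> \<nu> * (z \<bullet> z)" unfolding \<nu>_def by (rule quad_bound)
    then have "k * (z \<bullet> (Y *v z)) \<le> \<alpha> * (z \<bullet> z)"
      using knu mult_left_mono[of "z \<bullet> (Y *v z)" "\<nu> * (z \<bullet> z)" k] k_def tau_pos
      by (simp add: mult.assoc[symmetric])
    moreover have "\<alpha> * (z \<bullet> z) < z \<bullet> z" using z assms(3) by simp
    ultimately have "z \<bullet> z - k * (z \<bullet> (Y *v z)) > 0" by linarith
    then show "x \<bullet> (S *v x) > 0" unfolding S_def qf_S q1 q2 using c_pos by simp
  qed
  obtain R :: "real^'n^'n" where iR: "invertible R" and SR: "S = R ** transpose R"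
    using pd_sqrt[OF S_pd] by blast
  define q where "q = (\<lambda>t::real. trace (((E + t *\<^sub>R X) ** S) ** ((E + t *\<^sub>R X) ** S)))"
  define Et where "Et = (\<lambda>t::real. (1 / (1 + t)) *\<^sub>R (E + t *\<^sub>R X))"
  define a0 where "a0 = trace ((E ** S) ** (E ** S))"
  define b0 where "b0 = trace ((X ** S) ** (E ** S))"
  define c0 where "c0 = trace ((X ** S) ** (X ** S))"
  have qform: "q t = a0 + 2*b0*t + c0*t^2" for t
  proof -
    have "(E + t *\<^sub>R X) ** S = E ** S + t *\<^sub>R (X ** S)" by (simp add: mm_add_left mm_scale_left)
    then show ?thesis unfolding q_def a0_def b0_def c0_def by (simp add: quad_trace)
  qed
  have a0v: "a0 = c"
  proof -
    have "a0 = c^2 * (n - 2*(k*\<tau>) + (k * \<nu>)^2)"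
      unfolding a0_def ES tr_aff1 tXEi tAA n_def by (simp add: power_mult_distrib algebra_simps)
    also have "\<dots> = c * (c * (n - \<alpha>^2))" unfolding ktau knu by (simp add: power2_eq_square algebra_simps)
    finally show ?thesis using cn by simp
  qed
  have b0neg: "b0 < 0"
  proof -
    have "b0 = c^2 * (\<tau> - 2*(k*\<nu>^2) + k^2 * trace ((X ** Ei) ** (X ** Ei) ** (X ** Ei)))"
      unfolding b0_def XS ES tr_aff2 tXEi tAA by (simp add: algebra_simps)
    also have "\<dots> = c^2 * (k^2 * trace ((X ** Ei) ** (X ** Ei) ** (X ** Ei)) - \<tau>)"
      unfolding knu2 by simp
    finally have b0e: "b0 = c^2 * (k^2 * trace ((X ** Ei) ** (X ** Ei) ** (X ** Ei)) - \<tau>)" .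
    have "k^2 * trace ((X ** Ei) ** (X ** Ei) ** (X ** Ei)) \<le> k^2 * \<nu>^3"
      using tAAA by (intro mult_left_mono) auto
    also have "\<dots> = (k*\<nu>)^2 * \<nu>" by (simp add: power2_eq_square power3_eq_cube)
    also have "\<dots> = \<alpha> * \<tau>" unfolding knu tau by (simp add: power2_eq_square)
    also have "\<dots> < \<tau>" using assms(3) tau_pos by simp
    finally show ?thesis unfolding b0e using c_pos by (simp add: mult_pos_neg)
  qed
  have M_facts: "trace ((N ** S) ** (N ** S)) = (transpose R ** N ** R) \<bullet> (transpose R ** N ** R)"
      "trace (transpose R ** N ** R) = trace (N ** S)"
      "transpose (transpose R ** N ** R) = transpose R ** N ** R" if "transpose N = N" for N
    using trS_R[OF SR that] by auto
  have c0pos: "c0 > 0"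
  proof -
    have "c0 = (transpose R ** X ** R) \<bullet> (transpose R ** X ** R)" unfolding c0_def by (rule M_facts(1)[OF sX])
    moreover have "transpose R ** X ** R \<noteq> 0"
    proof
      assume h: "transpose R ** X ** R = 0"
      have "X = transpose (matrix_inv R) ** (transpose R ** X ** R) ** matrix_inv R"
      proof -
        have "transpose (matrix_inv R) ** (transpose R ** X ** R) ** matrix_inv R
           = transpose (R ** matrix_inv R) ** X ** (R ** matrix_inv R)"
          by (simp add: matrix_transpose_mul matrix_mul_assoc)
        then show ?thesis using invertible_imp[OF iR] by simp
      qed
      then have "X = 0" using h by simp
      then show False using assms(4) by simp
    qed
    ultimately show ?thesis by simp
  qed
  have sN: "transpose (E + t *\<^sub>R X) = E + t *\<^sub>R X" for t
    by (simp add: transpose_add transpose_scalar sE sX)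
  have trNS: "trace ((E + t *\<^sub>R X) ** S) = 1" for t
    by (simp add: mm_add_left mm_scale_left trace_add trace_scaleR trES trXS)
  have q_nonneg: "q t \<ge> 0" for t unfolding q_def M_facts(1)[OF sN] by simp
  have part1: "\<forall>\<beta> t. 0 < \<beta> \<longrightarrow> \<beta> < 1 \<longrightarrow> t > -1 \<longrightarrow>
                 ((Et t \<in> pos_def \<and> S \<in> sym_top interior_of (dual_cone (coneK (Et t) \<beta>)))
                  \<longleftrightarrow> q t < 1 / (n - \<beta>\<^sup>2))"
  proof (intro allI impI)
    fix \<beta> t :: real assume b: "0 < \<beta>" "\<beta> < 1" and t: "t > -1"
    have tp: "1 + t > 0" using t by simp
    have b2: "\<beta>^2 < 1" using b by (simp add: power_less_one_iff abs_less_iff)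
    have nb: "n - \<beta>^2 > 0" using n1 b2 by simp
    define sb where "sb = sqrt (n - \<beta>^2)"
    have sb0: "sb > 0" unfolding sb_def using nb by simp
    have EtS: "Et t ** S = (1 / (1 + t)) *\<^sub>R ((E + t *\<^sub>R X) ** S)" unfolding Et_def by (simp add: mm_scale_left)
    have tr1: "trace (Et t ** S) = 1 / (1 + t)" unfolding EtS by (simp add: trace_scaleR trNS)
    have tr2: "trace ((Et t ** S) ** (Et t ** S)) = (1 / (1 + t))^2 * q t"
      unfolding EtS q_def by (simp add: mm_scale_left mm_scale_right trace_scaleR power2_eq_square)
    have key: "trace (Et t ** S) > sqrt (real CARD('n) - \<beta>^2) * sqrt (trace ((Et t ** S) ** (Et t ** S)))
        \<longleftrightarrow> q t < 1 / (n - \<beta>^2)"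
    proof -
      have "sqrt (trace ((Et t ** S) ** (Et t ** S))) = (1 / (1 + t)) * sqrt (q t)"
        unfolding tr2 using tp q_nonneg[of t] by (simp add: real_sqrt_mult)
      then have e: "sqrt (real CARD('n) - \<beta>^2) * sqrt (trace ((Et t ** S) ** (Et t ** S)))
          = (1 / (1 + t)) * (sb * sqrt (q t))" unfolding sb_def n_def by simp
      have tpi: "1 / (1 + t) > 0" using tp by simp
      have "trace (Et t ** S) > sqrt (real CARD('n) - \<beta>^2) * sqrt (trace ((Et t ** S) ** (Et t ** S)))
          \<longleftrightarrow> (1 / (1 + t)) * (sb * sqrt (q t)) < (1 / (1 + t)) * 1"
        unfolding tr1 e by simp
      also have "\<dots> \<longleftrightarrow> 1 > sb * sqrt (q t)" using mult_less_cancel_left_pos[OF tpi] by blast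
      also have "\<dots> \<longleftrightarrow> 1 > (sb * sqrt (q t))^2"
      proof -
        have y0: "0 \<le> sb * sqrt (q t)" using sb0 q_nonneg[of t] by simp
        show ?thesis using power_less_one_iff[OF y0, of 2] by simp
      qed
      also have "\<dots> \<longleftrightarrow> (n - \<beta>^2) * q t < 1"
        unfolding sb_def using nb q_nonneg[of t] by (simp add: power_mult_distrib)
      also have "\<dots> \<longleftrightarrow> q t < 1 / (n - \<beta>^2)" using nb by (simp add: field_simps)
      finally show ?thesis .
    qed
    show "(Et t \<in> pos_def \<and> S \<in> sym_top interior_of (dual_cone (coneK (Et t) \<beta>))) \<longleftrightarrow> q t < 1 / (n - \<beta>\<^sup>2)"
    proof
      assume "Et t \<in> pos_def \<and> S \<in> sym_top interior_of (dual_cone (coneK (Et t) \<beta>))"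
      then show "q t < 1 / (n - \<beta>\<^sup>2)" using dual_int[OF _ b sS, of "Et t"] key by blast
    next
      assume ql: "q t < 1 / (n - \<beta>\<^sup>2)"
      define M where "M = transpose R ** (E + t *\<^sub>R X) ** R"
      have trM: "trace M = 1" unfolding M_def M_facts(2)[OF sN] by (rule trNS)
      have MM: "(real CARD('n) - \<beta>^2) * (M \<bullet> M) < 1"
        using ql nb unfolding M_def q_def M_facts(1)[OF sN] n_def by (simp add: field_simps)
      have Npd: "E + t *\<^sub>R X \<in> pos_def"
        by (rule pd_from_congr[OF iR sN]) (use trace1_pd[OF trM b2 MM] M_def in simp)
      have Etpd: "Et t \<in> pos_def" unfolding Et_def using Npd tp by (intro pd_scale) auto
      moreover have "S \<in> sym_top interior_of (dual_cone (coneK (Et t) \<beta>))"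
        using dual_int[OF Etpd b sS] key ql by blast
      ultimately show "Et t \<in> pos_def \<and> S \<in> sym_top interior_of (dual_cone (coneK (Et t) \<beta>))" by blast
    qed
  qed
  have part2: "strict_convex_on UNIV q"
    unfolding strict_convex_on_def
  proof (intro conjI ballI allI impI)
    show "convex (UNIV :: real set)" by simp
    fix x y u :: real assume xy: "x \<noteq> y" and u: "0 < u" "u < 1"
    have "(1 - u) * q x + u * q y - q ((1 - u) * x + u * y) = c0 * (u * (1 - u) * (x - y)^2)"
      unfolding qform power2_eq_square by algebra
    moreover have "c0 * (u * (1 - u) * (x - y)^2) > 0" using c0pos u xy by simp
    ultimately show "q ((1 - u) * x + u * y) < (1 - u) * q x + u * q y" by simp
  qed
  have part3: "q 0 = 1 / (n - \<alpha>\<^sup>2)" using qform[of 0] a0v c_def by simp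
  have part4: "\<exists>d. (q has_real_derivative d) (at 0) \<and> d < 0"
  proof (intro exI conjI)
    have qe: "q = (\<lambda>z. a0 + 2*b0*z + c0*z^2)" using qform by (simp add: fun_eq_iff)
    show "(q has_real_derivative 2*b0) (at 0)" unfolding qe
      by (auto intro!: derivative_eq_intros)
    show "2*b0 < 0" using b0neg by simp
  qed
  have main: "(\<forall>\<beta> t. 0 < \<beta> \<longrightarrow> \<beta> < 1 \<longrightarrow> t > -1 \<longrightarrow>
                 ((Et t \<in> pos_def \<and> S \<in> sym_top interior_of (dual_cone (coneK (Et t) \<beta>)))
                  \<longleftrightarrow> q t < 1 / (n - \<beta>\<^sup>2)))
            \<and> strict_convex_on UNIV q
            \<and> q 0 = 1 / (n - \<alpha>\<^sup>2)
            \<and> (\<exists>d. (q has_real_derivative d) (at 0) \<and> d < 0)"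
    using part1 part2 part3 part4 by blast
  show ?thesis
    unfolding Let_def
    using main[unfolded q_def Et_def S_def c_def k_def \<tau>_def n_def Ei_def] .
qed

end
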